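(* Let $(R,d)$ be a fusion algebra with a finite generating set $X\subseteq I$. Then $\omega_X(R,d)=\max\bigl(1,\lim_{n\to\infty}\sqrt[n]{|S_X(n)|}\bigr)$.
   Context: A fusion algebra $(R,d)$ consists of a set $I$ with distinguished $e$ and involution $\alpha\mapsto\bar\alpha$, a unital ring structure on $R=\mathbb{Z}[I]$ with unit $e$ and $\xi\eta=\sum_\alpha N^\alpha_{\xi,\eta}\alpha$, $N^\alpha_{\xi,\eta}\in\mathbb{Z}_{\ge0}$ finitely many nonzero, the involution extending to a $\mathbb{Z}$-linear antimultiplicative involution, Frobenius reciprocity $N^\alpha_{\xi,\eta}=N^\xi_{\alpha,\bar\eta}=N^\eta_{\bar\xi,\alpha}$, and $\mathbb{Z}$-linear multiplicative $d:R\to\mathbb{R}$ with $d(\bar\alpha)=d(\alpha)\ge1$ on $I$. Write $\alpha\subseteq r$ if $\alpha$ has nonzero coefficient in $r$. $|A|=\sum_{\alpha\in A}d(\alpha)^2$. A finite generating set is a finite $X\subseteq I$ with $\bar X=X$ such that every $\alpha\in I$ satisfies $\alpha\subseteq x_1\cdots x_n$ for some $x_i\in X$. $\ell_X(e)=0$, otherwise $\ell_X(\alpha)$ is the least $n\ge1$ with $\alpha\subseteq x_1\cdots x_n$, $x_i\in X$; $B_X(n)=\{\alpha:\ell_X(\alpha)\le n\}$, $S_X(n)=\{\alpha:\ell_X(\alpha)=n\}$. The exponential growth rate is $\omega_X(R,d)=\lim_{n\to\infty}|B_X(n)|^{1/n}$; both this limit and $\lim_n|S_X(n)|^{1/n}$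 exist (the latter equals $0$ when $I$ is finite). *)

theory Defs
  imports Complex_Main
begin

text \<open>Elements of R = Z[I] are represented as coefficient functions 'i => int
  (finitely supported in all uses).  Structure constants: N a x y = N^a_{x,y}.\<close>

definition supp :: "('i \<Rightarrow> int) \<Rightarrow> 'i set" where
  "supp r = {a. r a \<noteq> 0}"

definition basis :: "'i \<Rightarrow> 'i \<Rightarrow> int" where
  "basis a = (\<lambda>b. if b = a then 1 else 0)"

definition fmult :: "('i \<Rightarrow> 'i \<Rightarrow> 'i \<Rightarrow> nat) \<Rightarrow> ('i \<Rightarrow> int) \<Rightarrow> ('i \<Rightarrow> int) \<Rightarrow> 'i \<Rightarrow> int" where
  "fmult N r s = (\<lambda>a. \<Sum>x\<in>supp r. \<Sum>y\<in>supp s. r x * s y * int (N a x y))"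

fun word_prod :: "('i \<Rightarrow> 'i \<Rightarrow> 'i \<Rightarrow> nat) \<Rightarrow> 'i \<Rightarrow> 'i list \<Rightarrow> 'i \<Rightarrow> int" where
  "word_prod N e [] = basis e"
| "word_prod N e (x # xs) = fmult N (basis x) (word_prod N e xs)"

definition fusion_algebra ::
  "'i set \<Rightarrow> 'i \<Rightarrow> ('i \<Rightarrow> 'i) \<Rightarrow> ('i \<Rightarrow> 'i \<Rightarrow> 'i \<Rightarrow> nat) \<Rightarrow> ('i \<Rightarrow> real) \<Rightarrow> bool" where
  "fusion_algebra I e bar N d \<longleftrightarrow>
     e \<in> I \<and> (\<forall>a\<in>I. bar a \<in> I \<and> bar (bar a) = a)
   \<comment> \<open>structure constants live on I and have finite support\<close>
   \<and> (\<forall>a x y. N a x y \<noteq> 0 \<longrightarrow> a \<in> I \<and> x \<in> I \<and> y \<in> I)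
   \<and> (\<forall>x\<in>I. \<forall>y\<in>I. finite {a. N a x y \<noteq> 0})
   \<comment> \<open>e is a two-sided unit\<close>
   \<and> (\<forall>a\<in>I. \<forall>x\<in>I. N a e x = (if a = x then 1 else 0) \<and> N a x e = (if a = x then 1 else 0))
   \<comment> \<open>associativity\<close>
   \<and> (\<forall>a\<in>I. \<forall>x\<in>I. \<forall>y\<in>I. \<forall>z\<in>I.
        (\<Sum>b\<in>{b. N b x y \<noteq> 0}. N b x y * N a b z) = (\<Sum>b\<in>{b. N b y z \<noteq> 0}. N a x b * N b y z))
   \<comment> \<open>the involution is antimultiplicative: bar(x y) = bar y * bar x\<close>
   \<and> (\<forall>a\<in>I. \<forall>x\<in>I. \<forall>y\<in>I. N (bar a) (bar y) (bar x) = N a x y)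
   \<comment> \<open>Frobenius reciprocity\<close>
   \<and> (\<forall>a\<in>I. \<forall>x\<in>I. \<forall>y\<in>I. N a x y = N x a (bar y) \<and> N a x y = N y (bar x) a)
   \<comment> \<open>d: Z-linear (determined by values on I), multiplicative, d(bar a) = d a >= 1\<close>
   \<and> (\<forall>x\<in>I. \<forall>y\<in>I. d x * d y = (\<Sum>a\<in>{a. N a x y \<noteq> 0}. real (N a x y) * d a))
   \<and> (\<forall>a\<in>I. d (bar a) = d a \<and> d a \<ge> 1)"

definition finite_generating_set ::
  "'i set \<Rightarrow> 'i \<Rightarrow> ('i \<Rightarrow> 'i) \<Rightarrow> ('i \<Rightarrow> 'i \<Rightarrow> 'i \<Rightarrow> nat) \<Rightarrow> 'i set \<Rightarrow> bool" where
  "finite_generating_set I e bar N X \<longleftrightarrow>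
     finite X \<and> X \<subseteq> I \<and> bar ` X = X \<and>
     (\<forall>a\<in>I. \<exists>xs. set xs \<subseteq> X \<and> a \<in> supp (word_prod N e xs))"

definition word_length ::
  "'i \<Rightarrow> ('i \<Rightarrow> 'i \<Rightarrow> 'i \<Rightarrow> nat) \<Rightarrow> 'i set \<Rightarrow> 'i \<Rightarrow> nat" where
  "word_length e N X a = (if a = e then 0 else
     (LEAST n. n \<ge> 1 \<and> (\<exists>xs. length xs = n \<and> set xs \<subseteq> X \<and> a \<in> supp (word_prod N e xs))))"

definition ball_X :: "'i set \<Rightarrow> 'i \<Rightarrow> ('i \<Rightarrow> 'i \<Rightarrow> 'i \<Rightarrow> nat) \<Rightarrow> 'i set \<Rightarrow> nat \<Rightarrow> 'i set" where
  "ball_X I e N X n = {a\<in>I. word_length e N X a \<le> n}"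

definition sphere_X :: "'i set \<Rightarrow> 'i \<Rightarrow> ('i \<Rightarrow> 'i \<Rightarrow> 'i \<Rightarrow> nat) \<Rightarrow> 'i set \<Rightarrow> nat \<Rightarrow> 'i set" where
  "sphere_X I e N X n = {a\<in>I. word_length e N X a = n}"

text \<open>|A| = sum of d(a)^2 over A\<close>
definition dsize :: "('i \<Rightarrow> real) \<Rightarrow> 'i set \<Rightarrow> real" where
  "dsize d A = (\<Sum>a\<in>A. d a ^ 2)"

definition growth_rate ::
  "'i set \<Rightarrow> 'i \<Rightarrow> ('i \<Rightarrow> 'i \<Rightarrow> 'i \<Rightarrow> nat) \<Rightarrow> ('i \<Rightarrow> real) \<Rightarrow> 'i set \<Rightarrow> real" where
  "growth_rate I e N d X = lim (\<lambda>n. dsize d (ball_X I e N X n) powr (1 / real n))"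

end

theory Submission
  imports Defs
begin


lemma fekete_bound:
  fixes f :: "nat \<Rightarrow> real"
  assumes nn: "\<And>n. 0 \<le> f n"
    and sm: "\<And>n m. 1 \<le> n \<Longrightarrow> 1 \<le> m \<Longrightarrow> f (n+m) \<le> f n * f m"
    and st: "(INF n\<in>{1..}. f n powr (1/real n)) < t"
  shows "\<exists>C>0. \<forall>n\<ge>1. f n \<le> C * t^n"
proof -
  have bdd: "bdd_below ((\<lambda>n. f n powr (1/real n)) ` {1..})"
    by (rule bdd_belowI[of _ 0]) auto
  obtain k where k1: "1 \<le> k" and fk: "f k powr (1/real k) < t"
    using st cINF_less_iff[OF _ bdd] by fastforce
  have t0: "0 < t" using fk by (smt (verit) powr_ge_zero)
  have fkt: "f k \<le> t^k"
  proof (cases "f k = 0")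
    case True then show ?thesis using t0 by simp
  next
    case False
    then have "f k = (f k powr (1/real k)) ^ k"
      using nn[of k] k1 by (simp add: powr_realpow[symmetric] powr_powr)
    also have "\<dots> \<le> t ^ k" using fk by (intro power_mono) auto
    finally show ?thesis .
  qed
  define M where "M = Max (f ` {1..k})"
  define C where "C = (M + 1) / min 1 (t^k)"
  have M0: "0 \<le> M" using k1 nn unfolding M_def
    by (meson Max_ge atLeastAtMost_iff finite_atLeastAtMost finite_imageI image_eqI order_trans le_refl)
  have mp: "0 < min 1 (t^k)" using t0 by simp
  have C0: "0 < C" unfolding C_def using M0 mp by simp
  have "\<forall>n\<ge>1. f n \<le> C * t^n"
  proof (intro allI impI)
    fix n :: nat assume "1 \<le> n"
    then show "f n \<le> C * t^n"
    proof (induction n rule: less_induct)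
      case (less n)
      show ?case
      proof (cases "n \<le> k")
        case True
        have "f n \<le> M" unfolding M_def using True less.prems by (intro Max_ge) auto
        also have "\<dots> \<le> C * min 1 (t^k)" unfolding C_def using mp by simp
        also have "\<dots> \<le> C * t^n"
        proof (intro mult_left_mono)
          show "min 1 (t^k) \<le> t^n"
          proof (cases "t \<ge> 1")
            case True then show ?thesis by (simp add: min.coboundedI1 one_le_power)
          next
            case False then show ?thesis using t0 \<open>n \<le> k\<close>
              by (simp add: min.coboundedI2 power_decreasing)
          qed
        qed (use C0 in auto)
        finally show ?thesis .
      next
        case False
        then have "f n = f (k + (n-k))" by simp
        also have "\<dots> \<le> f k * f (n-k)" using False k1 by (intro sm) auto
        also have "\<dots> \<le> t^k * (C * t^(n-k))"
          using less.IH[of "n-k"] False k1 nn t0 fkt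
          by (intro mult_mono) auto
        also have "\<dots> = C * t^n" using False
          by (simp add: power_add[symmetric])
        finally show ?thesis .
      qed
    qed
  qed
  then show ?thesis using C0 by blast
qed

lemma fekete:
  fixes f :: "nat \<Rightarrow> real"
  assumes nn: "\<And>n. 0 \<le> f n"
    and sm: "\<And>n m. 1 \<le> n \<Longrightarrow> 1 \<le> m \<Longrightarrow> f (n+m) \<le> f n * f m"
  shows "(\<lambda>n. f n powr (1/real n)) \<longlonglongrightarrow> (INF n\<in>{1..}. f n powr (1/real n))"
proof -
  define s where "s = (INF n\<in>{1..}. f n powr (1/real n))"
  have bdd: "bdd_below ((\<lambda>n. f n powr (1/real n)) ` {1..})"
    by (rule bdd_belowI[of _ 0]) auto
  have low: "s \<le> f n powr (1/real n)" if "1 \<le> n" for n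
    unfolding s_def using bdd that by (intro cINF_lower) auto
  show ?thesis unfolding s_def[symmetric]
  proof (rule order_tendstoI)
    fix a assume "a < s"
    show "\<forall>\<^sub>F n in sequentially. a < f n powr (1/real n)"
    proof (rule eventually_sequentiallyI[of 1])
      fix n :: nat assume "1 \<le> n"
      then show "a < f n powr (1/real n)" using low[of n] \<open>a < s\<close> by linarith
    qed
  next
    fix a assume "s < a"
    define t where "t = (s + a) / 2"
    have "s < t" "t < a" using \<open>s < a\<close> unfolding t_def by auto
    obtain C where C0: "C > 0" and Cb: "\<forall>n\<ge>1. f n \<le> C * t^n"
      using fekete_bound[OF nn sm, of t] \<open>s < t\<close> s_def by auto
    have s0: "0 \<le> s" unfolding s_def using bdd
      by (intro cINF_greatest) auto
    have t0: "0 < t" using s0 \<open>s < t\<close> by simp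
    have lim1: "(\<lambda>n. C powr (1/real n) * t) \<longlonglongrightarrow> C powr 0 * t"
    proof -
      have "(\<lambda>n. 1 / real n) \<longlonglongrightarrow> 0"
        by (rule lim_const_over_n)
      then have "(\<lambda>n. C powr (1/real n)) \<longlonglongrightarrow> C powr 0"
        using C0 by (intro tendsto_powr tendsto_const) auto
      then show ?thesis by (intro tendsto_mult tendsto_const)
    qed
    then have "\<forall>\<^sub>F n in sequentially. C powr (1/real n) * t < a"
      using C0 \<open>t < a\<close> by (intro order_tendstoD(2)[OF lim1]) auto
    moreover have "\<forall>\<^sub>F n in sequentially. f n powr (1/real n) \<le> C powr (1/real n) * t"
      using eventually_ge_at_top[of 1]
    proof eventually_elim
      case (elim n)
      have "f n powr (1/real n) \<le> (C * t^n) powr (1/real n)"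
        using Cb elim nn by (intro powr_mono2) auto
      also have "\<dots> = C powr (1/real n) * (t^n) powr (1/real n)"
        using C0 t0 by (simp add: powr_mult)
      also have "(t^n) powr (1/real n) = t"
        using t0 elim by (simp add: powr_realpow[symmetric] powr_powr)
      finally show ?case by simp
    qed
    ultimately show "\<forall>\<^sub>F n in sequentially. f n powr (1/real n) < a"
      by eventually_elim auto
  qed
qed

lemma aux_lim:
  fixes D :: real assumes "D > 0"
  shows "(\<lambda>n. exp ((ln (real n + 1) + ln D) / real n)) \<longlonglongrightarrow> 1"
proof -
  have l1: "(\<lambda>n. ln (real n) / real n) \<longlonglongrightarrow> 0"
    by (rule filterlim_compose[OF ln_x_over_x_tendsto_0 filterlim_real_sequentially])
  have l2: "(\<lambda>n. ln (real n + 1) / (real n + 1)) \<longlonglongrightarrow> 0"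
    using LIMSEQ_Suc[OF l1] by (simp add: add.commute)
  have l3: "(\<lambda>n. 1 + 1 / real n) \<longlonglongrightarrow> 1 + 0"
    by (intro tendsto_add tendsto_const lim_const_over_n)
  have l4: "(\<lambda>n. ln D * (1 / real n)) \<longlonglongrightarrow> ln D * 0"
    by (intro tendsto_mult tendsto_const lim_const_over_n)
  have l5: "(\<lambda>n. ln (real n + 1) / (real n + 1) * (1 + 1 / real n) + ln D * (1 / real n)) \<longlonglongrightarrow> 0 * (1 + 0) + ln D * 0"
    by (intro tendsto_add tendsto_mult l2 l3 l4)
  have eq: "ln (real n + 1) / (real n + 1) * (1 + 1 / real n) + ln D * (1 / real n) = (ln (real n + 1) + ln D) / real n"
    if "n \<ge> 1" for n :: nat
  proof -
    have pos: "real n > 0" using that by simp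
    have "1 + 1/real n = (real n + 1) / real n" using pos by (simp add: field_simps)
    then have "ln (real n + 1) / (real n + 1) * (1 + 1 / real n) = ln (real n + 1) / (real n + 1) * ((real n + 1) / real n)" by simp
    also have "\<dots> = ln (real n + 1) / real n" using pos by simp
    finally show ?thesis using pos by (simp add: add_divide_distrib)
  qed
  have l6: "(\<lambda>n. (ln (real n + 1) + ln D) / real n) \<longlonglongrightarrow> 0"
  proof (rule Lim_transform_eventually)
    show "(\<lambda>n. ln (real n + 1) / (real n + 1) * (1 + 1 / real n) + ln D * (1 / real n)) \<longlonglongrightarrow> 0"
      using l5 by simp
    show "\<forall>\<^sub>F n in sequentially. ln (real n + 1) / (real n + 1) * (1 + 1 / real n) + ln D * (1 / real n) = (ln (real n + 1) + ln D) / real n"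
      by (rule eventually_sequentiallyI[of 1]) (rule eq)
  qed
  show ?thesis using tendsto_exp[OF l6] by simp
qed


definition sprod :: "('i \<Rightarrow> 'i \<Rightarrow> 'i \<Rightarrow> nat) \<Rightarrow> 'i set \<Rightarrow> 'i set \<Rightarrow> 'i set" where
  "sprod N A B = {c. \<exists>a\<in>A. \<exists>b\<in>B. 0 < N c a b}"

lemma supp_basis[simp]: "supp (basis a) = {a}"
  by (auto simp: supp_def basis_def)

lemma fmult_basis: "fmult N (basis x) r a = (\<Sum>y\<in>supp r. r y * int (N a x y))"
proof -
  have "fmult N (basis x) r a = (\<Sum>x'\<in>{x}. \<Sum>y\<in>supp r. basis x x' * r y * int (N a x' y))"
    unfolding fmult_def supp_basis ..
  also have "\<dots> = (\<Sum>y\<in>supp r. r y * int (N a x y))" by (simp add: basis_def)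
  finally show ?thesis .
qed

context
  fixes I :: "'i set" and e :: 'i and bar :: "'i \<Rightarrow> 'i"
    and N :: "'i \<Rightarrow> 'i \<Rightarrow> 'i \<Rightarrow> nat" and d :: "'i \<Rightarrow> real"
  assumes FA: "fusion_algebra I e bar N d"
begin

lemma eI: "e \<in> I" using FA unfolding fusion_algebra_def by blast
lemma NI: "N a x y \<noteq> 0 \<Longrightarrow> a \<in> I \<and> x \<in> I \<and> y \<in> I"
  using FA unfolding fusion_algebra_def by blast
lemma Nfin: "x \<in> I \<Longrightarrow> y \<in> I \<Longrightarrow> finite {a. N a x y \<noteq> 0}"
  using FA unfolding fusion_algebra_def by blast
lemma Nunit: "a \<in> I \<Longrightarrow> x \<in> I \<Longrightarrow> N a e x = (if a = x then 1 else 0)"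
  using FA unfolding fusion_algebra_def by blast
lemma Nassoc: "a \<in> I \<Longrightarrow> x \<in> I \<Longrightarrow> y \<in> I \<Longrightarrow> z \<in> I \<Longrightarrow>
   (\<Sum>b\<in>{b. N b x y \<noteq> 0}. N b x y * N a b z) = (\<Sum>b\<in>{b. N b y z \<noteq> 0}. N a x b * N b y z)"
  using FA unfolding fusion_algebra_def by blast
lemma dmult: "x \<in> I \<Longrightarrow> y \<in> I \<Longrightarrow> d x * d y = (\<Sum>a\<in>{a. N a x y \<noteq> 0}. real (N a x y) * d a)"
  using FA unfolding fusion_algebra_def by blast
lemma dge1: "a \<in> I \<Longrightarrow> 1 \<le> d a"
  using FA unfolding fusion_algebra_def by blast

lemma wp_props: "(\<forall>a. 0 \<le> word_prod N e xs a) \<and> finite (supp (word_prod N e xs)) \<and> supp (word_prod N e xs) \<subseteq> I"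
proof (induction xs)
  case Nil
  have "supp (word_prod N e []) = {e}" by simp
  then show ?case using eI by (auto simp: basis_def)
next
  case (Cons x xs)
  let ?r = "word_prod N e xs"
  have eq: "word_prod N e (x # xs) = (\<lambda>a. \<Sum>y\<in>supp ?r. ?r y * int (N a x y))"
    by (rule ext) (simp only: word_prod.simps fmult_basis)
  have nn: "\<forall>a. 0 \<le> word_prod N e (x # xs) a"
    unfolding eq using Cons.IH by (auto intro!: sum_nonneg)
  have sub: "supp (word_prod N e (x # xs)) \<subseteq> (\<Union>y\<in>supp ?r. {a. N a x y \<noteq> 0})"
    unfolding eq supp_def by (auto elim!: sum.not_neutral_contains_not_neutral)
  have fin: "finite (\<Union>y\<in>supp ?r. {a. N a x y \<noteq> 0})"
  proof (cases "x \<in> I")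
    case True
    then show ?thesis by (intro finite_UN_I) (use Cons.IH True in \<open>blast intro: Nfin\<close>)+
  next
    case False
    then have "(\<Union>y\<in>supp ?r. {a. N a x y \<noteq> 0}) = {}" using NI by blast
    then show ?thesis by simp
  qed
  have "(\<Union>y\<in>supp ?r. {a. N a x y \<noteq> 0}) \<subseteq> I" using NI by blast
  then have s1: "supp (word_prod N e (x # xs)) \<subseteq> I" using sub by (rule order_trans[rotated])
  have f1: "finite (supp (word_prod N e (x # xs)))" using fin sub by (rule finite_subset[rotated])
  show ?case using nn s1 f1 by (intro conjI)
qed

lemma wp_Cons: "supp (word_prod N e (x # xs)) = sprod N {x} (supp (word_prod N e xs))"
proof -
  let ?r = "word_prod N e xs"
  have eq: "word_prod N e (x # xs) = (\<lambda>a. \<Sum>y\<in>supp ?r. ?r y * int (N a x y))"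
    by (rule ext) (simp only: word_prod.simps fmult_basis)
  have fin: "finite (supp ?r)" using wp_props[of xs] by blast
  have nn: "\<And>a. 0 \<le> ?r a" using wp_props[of xs] by blast
  have z: "\<forall>y\<in>supp ?r. (?r y * int (N a x y) = 0) \<longleftrightarrow> N a x y = 0" for a by (simp add: supp_def)
  have "(a \<in> supp (word_prod N e (x # xs))) \<longleftrightarrow> a \<in> sprod N {x} (supp ?r)" for a
  proof -
    have "(a \<in> supp (word_prod N e (x # xs))) \<longleftrightarrow> (\<Sum>y\<in>supp ?r. ?r y * int (N a x y)) \<noteq> 0"
      unfolding eq supp_def by simp
    also have "\<dots> \<longleftrightarrow> \<not> (\<forall>y\<in>supp ?r. ?r y * int (N a x y) = 0)"
      using fin nn by (subst sum_nonneg_eq_0_iff) auto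
    also have "\<dots> \<longleftrightarrow> (\<exists>y\<in>supp ?r. 0 < N a x y)"
      using z[of a] by auto
    finally show ?thesis unfolding sprod_def by simp
  qed
  then show ?thesis by (rule set_eqI)
qed

lemma wp_Nil: "supp (word_prod N e []) = {e}" by simp

lemma sprod_unit: assumes "A \<subseteq> I" shows "sprod N {e} A = A"
proof (rule set_eqI)
  fix c
  show "c \<in> sprod N {e} A \<longleftrightarrow> c \<in> A"
  proof
    assume "c \<in> sprod N {e} A"
    then obtain b where b: "b \<in> A" "0 < N c e b" unfolding sprod_def by blast
    then have "c \<in> I" "b \<in> I" using NI[of c e b] by auto
    then have "N c e b = (if c = b then 1 else 0)" by (rule Nunit)
    then show "c \<in> A" using b by (cases "c = b") auto
  next
    assume "c \<in> A"
    then have "c \<in> I" using assms by blast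
    then have "N c e c = 1" using Nunit[of c c] by simp
    then show "c \<in> sprod N {e} A" using \<open>c \<in> A\<close> unfolding sprod_def by force
  qed
qed

lemma assoc_pt:
  assumes "c \<in> I" "a \<in> I" "b \<in> I" "z \<in> I"
  shows "(\<exists>m. 0 < N m a b \<and> 0 < N c m z) \<longleftrightarrow> (\<exists>m. 0 < N c a m \<and> 0 < N m b z)"
proof -
  have f1: "finite {m. N m a b \<noteq> 0}" using assms by (intro Nfin)
  have f2: "finite {m. N m b z \<noteq> 0}" using assms by (intro Nfin)
  have eq: "(\<Sum>m\<in>{m. N m a b \<noteq> 0}. N m a b * N c m z) = (\<Sum>m\<in>{m. N m b z \<noteq> 0}. N c a m * N m b z)"
    using assms by (intro Nassoc)
  have "(\<exists>m. 0 < N m a b \<and> 0 < N c m z) \<longleftrightarrow> (\<Sum>m\<in>{m. N m a b \<noteq> 0}. N m a b * N c m z) \<noteq> 0"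
    using f1 by (subst sum_eq_0_iff) auto
  also have "\<dots> \<longleftrightarrow> (\<Sum>m\<in>{m. N m b z \<noteq> 0}. N c a m * N m b z) \<noteq> 0" using eq by simp
  also have "\<dots> \<longleftrightarrow> (\<exists>m. 0 < N c a m \<and> 0 < N m b z)"
    using f2 by (subst sum_eq_0_iff) auto
  finally show ?thesis .
qed

lemma sprod_assoc:
  assumes "A \<subseteq> I" "B \<subseteq> I" "D \<subseteq> I"
  shows "sprod N (sprod N A B) D = sprod N A (sprod N B D)"
proof (rule set_eqI)
  fix c
  have "c \<in> sprod N (sprod N A B) D \<longleftrightarrow> (\<exists>a\<in>A. \<exists>b\<in>B. \<exists>z\<in>D. \<exists>m. 0 < N m a b \<and> 0 < N c m z)"
    unfolding sprod_def by blast
  also have "\<dots> \<longleftrightarrow> (\<exists>a\<in>A. \<exists>b\<in>B. \<exists>z\<in>D. \<exists>m. 0 < N c a m \<and> 0 < N m b z)"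
  proof -
    have "(\<exists>m. 0 < N m a b \<and> 0 < N c m z) \<longleftrightarrow> (\<exists>m. 0 < N c a m \<and> 0 < N m b z)"
      if "a \<in> A" "b \<in> B" "z \<in> D" for a b z
    proof (cases "c \<in> I")
      case True
      then show ?thesis using assoc_pt[of c a b z] that assms by blast
    next
      case False
      then show ?thesis using NI[of c] by (metis not_less_zero)
    qed
    then show ?thesis by blast
  qed
  also have "\<dots> \<longleftrightarrow> c \<in> sprod N A (sprod N B D)"
    unfolding sprod_def by blast
  finally show "c \<in> sprod N (sprod N A B) D \<longleftrightarrow> c \<in> sprod N A (sprod N B D)" .
qed

lemma sprod_sub: "sprod N A B \<subseteq> I"
proof
  fix c assume "c \<in> sprod N A B"
  then obtain a b where "0 < N c a b" unfolding sprod_def by blast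
  then show "c \<in> I" using NI[of c a b] by simp
qed

lemma wp_sub: "supp (word_prod N e xs) \<subseteq> I" using wp_props by blast
lemma wp_fin: "finite (supp (word_prod N e xs))" using wp_props by blast

lemma wp_append: "supp (word_prod N e (u @ v)) = sprod N (supp (word_prod N e u)) (supp (word_prod N e v))"
proof (induction u)
  case Nil
  show ?case using sprod_unit[OF wp_sub[of v]] by simp
next
  case (Cons x u)
  show ?case
  proof (cases "x \<in> I")
    case True
    have "supp (word_prod N e ((x # u) @ v)) = sprod N {x} (sprod N (supp (word_prod N e u)) (supp (word_prod N e v)))"
      using Cons.IH wp_Cons[of x "u @ v"] by simp
    also have "\<dots> = sprod N (sprod N {x} (supp (word_prod N e u))) (supp (word_prod N e v))"
      using True wp_sub by (intro sprod_assoc[symmetric]) auto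
    finally show ?thesis using wp_Cons[of x u] by simp
  next
    case False
    have "sprod N {x} B = {}" for B
    proof -
      have "\<not> 0 < N c x b" for c b using False NI[of c x b] by auto
      then show ?thesis unfolding sprod_def by blast
    qed
    moreover have "sprod N {} B = {}" for B unfolding sprod_def by blast
    ultimately show ?thesis using wp_Cons[of x "u @ v"] wp_Cons[of x u] by simp
  qed
qed

lemma d_le_prod:
  assumes "a \<in> I" "b \<in> I" "N c a b \<noteq> 0"
  shows "d c \<le> d a * d b"
proof -
  have cI: "c \<in> I" using NI assms(3) by blast
  have fin: "finite {c. N c a b \<noteq> 0}" using assms by (intro Nfin)
  have "d c \<le> real (N c a b) * d c"
    using assms(3) dge1[OF cI] by (simp add: mult_le_cancel_right1)
  also have "\<dots> \<le> (\<Sum>c'\<in>{c. N c a b \<noteq> 0}. real (N c' a b) * d c')"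
  proof (rule member_le_sum)
    show "c \<in> {c. N c a b \<noteq> 0}" using assms(3) by simp
    show "finite {c. N c a b \<noteq> 0}" using fin .
    fix x assume "x \<in> {c. N c a b \<noteq> 0} - {c}"
    then have "x \<in> I" using NI by blast
    then show "0 \<le> real (N x a b) * d x" using dge1[of x] by simp
  qed
  also have "\<dots> = d a * d b" using dmult assms(1,2) by simp
  finally show ?thesis .
qed

lemma pair_bound:
  assumes "a \<in> I" "b \<in> I" "finite T"
  shows "(\<Sum>c\<in>T. if 0 < N c a b then d c ^ 2 else 0) \<le> d a ^ 2 * d b ^ 2"
proof -
  let ?Z = "{c. N c a b \<noteq> 0}"
  have fin: "finite ?Z" using assms by (intro Nfin)
  have ZI: "?Z \<subseteq> I" using NI by blast
  have "(\<Sum>c\<in>T. if 0 < N c a b then d c ^ 2 else 0) = (\<Sum>c\<in>{c\<in>T. 0 < N c a b}. d c ^ 2)"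
    using assms(3) by (simp add: sum.inter_filter)
  also have "\<dots> \<le> (\<Sum>c\<in>?Z. d c ^ 2)"
    using fin by (intro sum_mono2) auto
  also have "\<dots> \<le> (\<Sum>c\<in>?Z. real (N c a b) * d c * (d a * d b))"
  proof (intro sum_mono)
    fix c assume c: "c \<in> ?Z"
    then have cI: "c \<in> I" using ZI by blast
    have h1: "d c \<le> d a * d b" using d_le_prod assms c by blast
    have h2: "1 \<le> real (N c a b)" using c by simp
    have h3: "1 \<le> d c" using dge1[OF cI] .
    have "d c ^ 2 = 1 * d c * d c" by (simp add: power2_eq_square)
    also have "\<dots> \<le> real (N c a b) * d c * (d a * d b)"
      using h1 h2 h3 by (intro mult_mono) auto
    finally show "d c ^ 2 \<le> real (N c a b) * d c * (d a * d b)" .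
  qed
  also have "\<dots> = (\<Sum>c\<in>?Z. real (N c a b) * d c) * (d a * d b)"
    by (simp add: sum_distrib_right)
  also have "\<dots> = (d a * d b) * (d a * d b)"
    using dmult[OF assms(1,2)] by simp
  also have "\<dots> = d a ^ 2 * d b ^ 2"
    by (simp add: power2_eq_square)
  finally show ?thesis .
qed

lemma dsize_sprod:
  assumes A: "finite A" "A \<subseteq> I" and B: "finite B" "B \<subseteq> I"
    and T: "finite T" "T \<subseteq> sprod N A B"
  shows "dsize d T \<le> dsize d A * dsize d B"
proof -
  let ?g = "\<lambda>a b c. if 0 < N c a b then d c ^ 2 else 0"
  have step1: "d c ^ 2 \<le> (\<Sum>a\<in>A. \<Sum>b\<in>B. ?g a b c)" if cT: "c \<in> T" for c
  proof -
    obtain a b where ab: "a \<in> A" "b \<in> B" "0 < N c a b"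
      using cT T unfolding sprod_def by blast
    have "d c ^ 2 = ?g a b c" using ab by simp
    also have "\<dots> \<le> (\<Sum>b'\<in>B. ?g a b' c)"
      using ab B by (intro member_le_sum) auto
    also have "\<dots> \<le> (\<Sum>a'\<in>A. \<Sum>b'\<in>B. ?g a' b' c)"
      using ab A by (intro member_le_sum sum_nonneg) auto
    finally show ?thesis .
  qed
  have "dsize d T \<le> (\<Sum>c\<in>T. \<Sum>a\<in>A. \<Sum>b\<in>B. ?g a b c)"
    unfolding dsize_def using step1 by (intro sum_mono) auto
  also have "\<dots> = (\<Sum>a\<in>A. \<Sum>c\<in>T. \<Sum>b\<in>B. ?g a b c)"
    by (rule sum.swap)
  also have "\<dots> = (\<Sum>a\<in>A. \<Sum>b\<in>B. \<Sum>c\<in>T. ?g a b c)"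
    by (intro sum.cong refl sum.swap)
  also have "\<dots> \<le> (\<Sum>a\<in>A. \<Sum>b\<in>B. d a ^ 2 * d b ^ 2)"
    using A B T by (intro sum_mono pair_bound) auto
  also have "\<dots> = dsize d A * dsize d B"
    unfolding dsize_def by (simp add: sum_product)
  finally show ?thesis .
qed

end

definition reach :: "('i \<Rightarrow> 'i \<Rightarrow> 'i \<Rightarrow> nat) \<Rightarrow> 'i \<Rightarrow> 'i set \<Rightarrow> 'i \<Rightarrow> nat \<Rightarrow> bool" where
  "reach N e X a n \<longleftrightarrow> (\<exists>xs. length xs = n \<and> set xs \<subseteq> X \<and> a \<in> supp (word_prod N e xs))"

context
  fixes I :: "'i set" and e :: 'i and bar :: "'i \<Rightarrow> 'i"
    and N :: "'i \<Rightarrow> 'i \<Rightarrow> 'i \<Rightarrow> nat" and d :: "'i \<Rightarrow> real" and X :: "'i set"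
  assumes FA: "fusion_algebra I e bar N d"
    and FG: "finite_generating_set I e bar N X"
begin

lemma reach_I: "reach N e X a n \<Longrightarrow> a \<in> I"
  unfolding reach_def using wp_sub[OF FA] by blast

lemma reach_ex: "a \<in> I \<Longrightarrow> \<exists>n. reach N e X a n"
  using FG unfolding finite_generating_set_def reach_def by blast

lemma reach_0: "reach N e X a 0 \<longleftrightarrow> a = e"
  unfolding reach_def by auto

lemma wl_eq: assumes "a \<in> I" shows "word_length e N X a = (LEAST n. reach N e X a n)"
proof (cases "a = e")
  case True
  then have "reach N e X a 0" using reach_0 by simp
  then show ?thesis using True unfolding word_length_def by simp
next
  case False
  have "(\<lambda>n. n \<ge> 1 \<and> (\<exists>xs. length xs = n \<and> set xs \<subseteq> X \<and> a \<in> supp (word_prod N e xs)))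
        = reach N e X a"
  proof
    fix n show "(n \<ge> 1 \<and> (\<exists>xs. length xs = n \<and> set xs \<subseteq> X \<and> a \<in> supp (word_prod N e xs)))
        = reach N e X a n"
      using False reach_0[of a] unfolding reach_def[symmetric]
      by (cases n) auto
  qed
  then show ?thesis using False unfolding word_length_def by simp
qed

lemma wl_reach: "a \<in> I \<Longrightarrow> reach N e X a (word_length e N X a)"
  using wl_eq reach_ex by (metis LeastI_ex)

lemma wl_le: "a \<in> I \<Longrightarrow> reach N e X a n \<Longrightarrow> word_length e N X a \<le> n"
  using wl_eq by (simp add: Least_le)

lemma Xfin: "finite X" using FG unfolding finite_generating_set_def by blast

lemma ball_fin: "finite (ball_X I e N X n)"
proof -
  have "ball_X I e N X n \<subseteq> (\<Union>xs\<in>{xs. set xs \<subseteq> X \<and> length xs \<le> n}. supp (word_prod N e xs))"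
  proof
    fix a assume "a \<in> ball_X I e N X n"
    then have aI: "a \<in> I" and le: "word_length e N X a \<le> n" unfolding ball_X_def by auto
    from wl_reach[OF aI] obtain xs where "length xs = word_length e N X a" "set xs \<subseteq> X"
      "a \<in> supp (word_prod N e xs)" unfolding reach_def by blast
    then show "a \<in> (\<Union>xs\<in>{xs. set xs \<subseteq> X \<and> length xs \<le> n}. supp (word_prod N e xs))"
      using le by auto
  qed
  moreover have "finite (\<Union>xs\<in>{xs. set xs \<subseteq> X \<and> length xs \<le> n}. supp (word_prod N e xs))"
    using finite_lists_length_le[OF Xfin] wp_fin[OF FA] by blast
  ultimately show ?thesis by (rule finite_subset)
qed

lemma sphere_sub_ball: "sphere_X I e N X n \<subseteq> ball_X I e N X n"
  unfolding sphere_X_def ball_X_def by auto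

lemma sphere_fin: "finite (sphere_X I e N X n)"
  using ball_fin sphere_sub_ball by (rule finite_subset[rotated])

lemma split_word:
  assumes "a \<in> supp (word_prod N e xs)"
  shows "\<exists>\<alpha> \<beta>. \<alpha> \<in> supp (word_prod N e (take n xs)) \<and> \<beta> \<in> supp (word_prod N e (drop n xs))
     \<and> 0 < N a \<alpha> \<beta>"
proof -
  have "a \<in> supp (word_prod N e (take n xs @ drop n xs))" using assms by simp
  then show ?thesis unfolding wp_append[OF FA] sprod_def by blast
qed

lemma ball_sub: "ball_X I e N X (n + m) \<subseteq> sprod N (ball_X I e N X n) (ball_X I e N X m)"
proof
  fix a assume "a \<in> ball_X I e N X (n + m)"
  then have aI: "a \<in> I" and le: "word_length e N X a \<le> n + m" unfolding ball_X_def by auto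
  from wl_reach[OF aI] obtain xs where xs: "length xs = word_length e N X a" "set xs \<subseteq> X"
    "a \<in> supp (word_prod N e xs)" unfolding reach_def by blast
  obtain \<alpha> \<beta> where ab: "\<alpha> \<in> supp (word_prod N e (take n xs))" "\<beta> \<in> supp (word_prod N e (drop n xs))"
     "0 < N a \<alpha> \<beta>" using split_word[OF xs(3)] by blast
  have st: "set (take n xs) \<subseteq> X" using xs(2) by (meson order_trans set_take_subset)
  have sd: "set (drop n xs) \<subseteq> X" using xs(2) by (meson order_trans set_drop_subset)
  have ra: "reach N e X \<alpha> (length (take n xs))" unfolding reach_def using ab st
    by (intro exI[of _ "take n xs"]) auto
  have rb: "reach N e X \<beta> (length (drop n xs))" unfolding reach_def using ab sd
    by (intro exI[of _ "drop n xs"]) auto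
  have "\<alpha> \<in> ball_X I e N X n"
    using reach_I[OF ra] wl_le[OF reach_I[OF ra] ra] unfolding ball_X_def by auto
  moreover have "\<beta> \<in> ball_X I e N X m"
    using reach_I[OF rb] wl_le[OF reach_I[OF rb] rb] le xs(1) unfolding ball_X_def by auto
  ultimately show "a \<in> sprod N (ball_X I e N X n) (ball_X I e N X m)"
    using ab(3) unfolding sprod_def by blast
qed

lemma sphere_sub: "sphere_X I e N X (n + m) \<subseteq> sprod N (sphere_X I e N X n) (sphere_X I e N X m)"
proof
  fix a assume "a \<in> sphere_X I e N X (n + m)"
  then have aI: "a \<in> I" and wla: "word_length e N X a = n + m" unfolding sphere_X_def by auto
  from wl_reach[OF aI] obtain xs where xs: "length xs = n + m" "set xs \<subseteq> X"
    "a \<in> supp (word_prod N e xs)" unfolding reach_def wla by blast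
  obtain \<alpha> \<beta> where ab: "\<alpha> \<in> supp (word_prod N e (take n xs))" "\<beta> \<in> supp (word_prod N e (drop n xs))"
     "0 < N a \<alpha> \<beta>" using split_word[OF xs(3)] by blast
  have st: "set (take n xs) \<subseteq> X" using xs(2) by (meson order_trans set_take_subset)
  have sd: "set (drop n xs) \<subseteq> X" using xs(2) by (meson order_trans set_drop_subset)
  have ra: "reach N e X \<alpha> n" unfolding reach_def using ab st xs(1)
    by (intro exI[of _ "take n xs"]) auto
  have rb: "reach N e X \<beta> m" unfolding reach_def using ab sd xs(1)
    by (intro exI[of _ "drop n xs"]) auto
  have aI': "\<alpha> \<in> I" using reach_I[OF ra] .
  have bI': "\<beta> \<in> I" using reach_I[OF rb] .
  have "word_length e N X \<alpha> = n"
  proof (rule ccontr)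
    assume "word_length e N X \<alpha> \<noteq> n"
    then have lt: "word_length e N X \<alpha> < n" using wl_le[OF aI' ra] by simp
    from wl_reach[OF aI'] obtain u where u: "length u = word_length e N X \<alpha>" "set u \<subseteq> X"
      "\<alpha> \<in> supp (word_prod N e u)" unfolding reach_def by blast
    have "a \<in> sprod N (supp (word_prod N e u)) (supp (word_prod N e (drop n xs)))"
      using u(3) ab unfolding sprod_def by blast
    then have "a \<in> supp (word_prod N e (u @ drop n xs))" using wp_append[OF FA] by simp
    then have "reach N e X a (length u + m)" unfolding reach_def using u(2) sd xs(1)
      by (intro exI[of _ "u @ drop n xs"]) auto
    then have "word_length e N X a \<le> length u + m" by (rule wl_le[OF aI])
    then show False using lt u(1) wla by simp
  qed
  moreover have "word_length e N X \<beta> = m"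
  proof (rule ccontr)
    assume "word_length e N X \<beta> \<noteq> m"
    then have lt: "word_length e N X \<beta> < m" using wl_le[OF bI' rb] by simp
    from wl_reach[OF bI'] obtain v where v: "length v = word_length e N X \<beta>" "set v \<subseteq> X"
      "\<beta> \<in> supp (word_prod N e v)" unfolding reach_def by blast
    have "a \<in> sprod N (supp (word_prod N e (take n xs))) (supp (word_prod N e v))"
      using v(3) ab unfolding sprod_def by blast
    then have "a \<in> supp (word_prod N e (take n xs @ v))" using wp_append[OF FA] by simp
    then have "reach N e X a (n + length v)" unfolding reach_def using v(2) st xs(1)
      by (intro exI[of _ "take n xs @ v"]) auto
    then have "word_length e N X a \<le> n + length v" by (rule wl_le[OF aI])
    then show False using lt v(1) wla by simp
  qed
  ultimately show "a \<in> sprod N (sphere_X I e N X n) (sphere_X I e N X m)"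
    using ab(3) aI' bI' unfolding sprod_def sphere_X_def by blast
qed

lemma ball_submult: "dsize d (ball_X I e N X (n + m)) \<le> dsize d (ball_X I e N X n) * dsize d (ball_X I e N X m)"
  by (rule dsize_sprod[OF FA ball_fin _ ball_fin _ ball_fin ball_sub]) (auto simp: ball_X_def)

lemma sphere_submult: "dsize d (sphere_X I e N X (n + m)) \<le> dsize d (sphere_X I e N X n) * dsize d (sphere_X I e N X m)"
  by (rule dsize_sprod[OF FA sphere_fin _ sphere_fin _ sphere_fin sphere_sub]) (auto simp: sphere_X_def)

end

theorem lemma3p12:
  fixes I :: "'i set" and e :: 'i and bar :: "'i \<Rightarrow> 'i"
    and N :: "'i \<Rightarrow> 'i \<Rightarrow> 'i \<Rightarrow> nat" and d :: "'i \<Rightarrow> real" and X :: "'i set"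
  assumes "fusion_algebra I e bar N d"
    and "finite_generating_set I e bar N X"
  shows "growth_rate I e N d X
           = max 1 (lim (\<lambda>n. dsize d (sphere_X I e N X n) powr (1 / real n)))"
proof -
  note FA = assms(1) and FG = assms(2)
  define fS where "fS n = dsize d (sphere_X I e N X n)" for n
  define fB where "fB n = dsize d (ball_X I e N X n)" for n
  have nS: "\<And>n. 0 \<le> fS n" unfolding fS_def dsize_def by (intro sum_nonneg) auto
  have nB: "\<And>n. 0 \<le> fB n" unfolding fB_def dsize_def by (intro sum_nonneg) auto
  have smS: "\<And>n m. 1 \<le> n \<Longrightarrow> 1 \<le> m \<Longrightarrow> fS (n+m) \<le> fS n * fS m"
    unfolding fS_def by (rule sphere_submult[OF FA FG])
  have smB: "\<And>n m. 1 \<le> n \<Longrightarrow> 1 \<le> m \<Longrightarrow> fB (n+m) \<le> fB n * fB m"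
    unfolding fB_def by (rule ball_submult[OF FA FG])
  define s where "s = (INF n\<in>{1..}. fS n powr (1/real n))"
  define b where "b = (INF n\<in>{1..}. fB n powr (1/real n))"
  have LS: "(\<lambda>n. fS n powr (1/real n)) \<longlonglongrightarrow> s" unfolding s_def by (rule fekete[OF nS smS])
  have LB: "(\<lambda>n. fB n powr (1/real n)) \<longlonglongrightarrow> b" unfolding b_def by (rule fekete[OF nB smB])
  have g: "growth_rate I e N d X = b"
    unfolding growth_rate_def using LB unfolding fB_def by (rule limI)
  have l: "lim (\<lambda>n. dsize d (sphere_X I e N X n) powr (1 / real n)) = s"
    using LS unfolding fS_def by (rule limI)
  have s0: "0 \<le> s" using LS by (rule LIMSEQ_le_const) auto
  have eI: "e \<in> I" using eI[OF FA] .
  have fB1: "1 \<le> fB n" for n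
  proof -
    have eb: "e \<in> ball_X I e N X n" using eI unfolding ball_X_def word_length_def by simp
    have "1 \<le> d e ^ 2" using dge1[OF FA eI] by (simp add: one_le_power)
    also have "\<dots> \<le> fB n" unfolding fB_def dsize_def
      using eb ball_fin[OF FA FG] by (intro member_le_sum) auto
    finally show ?thesis .
  qed
  have b1: "1 \<le> b"
    using LB by (rule LIMSEQ_le_const) (use fB1 in \<open>auto intro!: ge_one_powr_ge_zero\<close>)
  have SB: "fS n \<le> fB n" for n
    unfolding fS_def fB_def dsize_def
    using sphere_sub_ball[OF FA FG] ball_fin[OF FA FG] by (intro sum_mono2) auto
  have sb: "s \<le> b"
    using LS LB by (rule LIMSEQ_le) (use SB nS in \<open>auto intro!: powr_mono2\<close>)
  have ub: "b \<le> max 1 s + \<epsilon>" if eps: "\<epsilon> > 0" for \<epsilon>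
  proof -
    define t where "t = s + \<epsilon>"
    have st: "s < t" "0 < t" using eps s0 unfolding t_def by auto
    obtain C where C0: "C > 0" and Cb: "\<forall>n\<ge>1. fS n \<le> C * t^n"
      using fekete_bound[OF nS smS, of t] st s_def by auto
    define T where "T = max 1 t"
    define D where "D = fS 0 + C"
    have T1: "1 \<le> T" unfolding T_def by simp
    have D0: "0 < D" unfolding D_def using nS[of 0] C0 by simp
    have kb: "fS k \<le> D * T^n" if "k \<le> n" for k n
    proof (cases "k = 0")
      case True
      have "fS k \<le> D" unfolding D_def using True C0 by simp
      also have "\<dots> \<le> D * T^n" using D0 T1 by (simp add: one_le_power)
      finally show ?thesis .
    next
      case False
      have "fS k \<le> C * t^k" using Cb False by simp
      also have "\<dots> \<le> C * T^k" using C0 st unfolding T_def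
        by (intro mult_left_mono power_mono) auto
      also have "\<dots> \<le> C * T^n" using C0 T1 that by (intro mult_left_mono power_increasing) auto
      also have "\<dots> \<le> D * T^n" unfolding D_def using nS[of 0] T1 by (intro mult_right_mono) auto
      finally show ?thesis .
    qed
    have Bdec: "ball_X I e N X n = (\<Union>k\<in>{..n}. sphere_X I e N X k)" for n
      unfolding ball_X_def sphere_X_def by auto
    have fBsum: "fB n = (\<Sum>k\<in>{..n}. fS k)" for n
      unfolding fB_def fS_def dsize_def Bdec
    proof (rule sum.UNION_disjoint)
      show "\<forall>i\<in>{..n}. finite (sphere_X I e N X i)" using sphere_fin[OF FA FG] by blast
      show "\<forall>i\<in>{..n}. \<forall>j\<in>{..n}. i \<noteq> j \<longrightarrow> sphere_X I e N X i \<inter> sphere_X I e N X j = {}"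
        unfolding sphere_X_def by auto
    qed simp
    have fBb: "fB n \<le> (real n + 1) * D * T^n" for n
    proof -
      have "fB n \<le> (\<Sum>k\<in>{..n}. D * T^n)" unfolding fBsum by (intro sum_mono kb) auto
      also have "\<dots> = (real n + 1) * D * T^n" by simp
      finally show ?thesis .
    qed
    have ev: "fB n powr (1/real n) \<le> exp ((ln (real n + 1) + ln D) / real n) * T" if n1: "n \<ge> 1" for n
    proof -
      have pos: "0 < fB n" using fB1[of n] by simp
      have T0: "0 < T" using T1 by simp
      have "fB n powr (1/real n) = exp (ln (fB n) / real n)"
        using pos by (simp add: powr_def)
      also have "\<dots> \<le> exp (ln ((real n + 1) * D * T^n) / real n)"
        using pos fBb[of n] n1 by (intro exp_mono divide_right_mono ln_mono) auto
      also have "ln ((real n + 1) * D * T^n) = ln (real n + 1) + ln D + real n * ln T"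
        using D0 T0 by (simp add: ln_mult ln_realpow)
      also have "exp ((ln (real n + 1) + ln D + real n * ln T) / real n) = exp ((ln (real n + 1) + ln D) / real n) * T"
        using n1 T0 by (simp add: add_divide_distrib exp_add)
      finally show ?thesis .
    qed
    have lim2: "(\<lambda>n. exp ((ln (real n + 1) + ln D) / real n) * T) \<longlonglongrightarrow> 1 * T"
      by (intro tendsto_mult aux_lim D0 tendsto_const)
    have "b \<le> 1 * T" using LB lim2 by (rule LIMSEQ_le) (use ev in auto)
    also have "\<dots> \<le> max 1 s + \<epsilon>" unfolding T_def t_def using eps by auto
    finally show ?thesis .
  qed
  have "b \<le> max 1 s" by (rule field_le_epsilon) (rule ub)
  then have "b = max 1 s" using b1 sb by simp
  then show ?thesis using g l by simp
qed

end
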